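(* Let $X,Y,Z$ be finite sets, $T\subseteq X\times Y\times Z$, and let $A\subseteq X$, $B\subseteq Y$, $C\subseteq Z$ be independent random subsets such that each element of $X$ is included in $A$ with probability $\alpha$, independently of the other elements, each element of $Y$ is included in $B$ with probability $\beta$, independently, and each element of $Z$ is included in $C$ with probability $\gamma$, independently. Then $$\Pr[T\cap(A\times B\times C)=\emptyset]\le(1-\alpha)^{|\pi_X(T)|}+(1-\beta)^{\min_{x\in\pi_X(T)}|\pi_Y(T\cap(\{x\}\times Y\times Z))|}+(1-\gamma)^{\min_{(x,y)\in\pi_{XY}(T)}|\pi_Z(T\cap(\{x\}\times\{y\}\times Z))|},$$ where $\pi_X,\pi_Y,\pi_Z,\pi_{XY}$ denote the projections from $X\times Y\times Z$ onto $X$, $Y$, $Z$, $X\times Y$ respectively. *)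

theory Defs
  imports "HOL-Probability.Probability"
begin

definition random_subset :: "'a set \<Rightarrow> real \<Rightarrow> 'a set pmf" where
  "random_subset S p = map_pmf (\<lambda>f. {x\<in>S. f x}) (Pi_pmf S False (\<lambda>_. bernoulli_pmf p))"

definition projX :: "'a \<times> 'b \<times> 'c \<Rightarrow> 'a" where "projX t = fst t"
definition projY :: "'a \<times> 'b \<times> 'c \<Rightarrow> 'b" where "projY t = fst (snd t)"
definition projZ :: "'a \<times> 'b \<times> 'c \<Rightarrow> 'c" where "projZ t = snd (snd t)"
definition projXY :: "'a \<times> 'b \<times> 'c \<Rightarrow> 'a \<times> 'b" where "projXY t = (fst t, fst (snd t))"

end

theory Submission imports Defs begin

lemma pair_bound:
  fixes p :: "'a pmf" and q :: "'b pmf"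
  assumes c: "0 \<le> c"
    and h: "\<And>a. a \<in> set_pmf p \<Longrightarrow> a \<notin> G \<Longrightarrow> measure_pmf.prob q {b. (a, b) \<in> S} \<le> c"
  shows "measure_pmf.prob (pair_pmf p q) S \<le> measure_pmf.prob p G + c"
proof -
  have "emeasure (measure_pmf (pair_pmf p q)) S = (\<integral>\<^sup>+x. indicator S x \<partial>pair_pmf p q)"
    by simp
  also have "\<dots> = (\<integral>\<^sup>+a. \<integral>\<^sup>+b. indicator S (a, b) \<partial>q \<partial>p)"
    by (rule nn_integral_pair_pmf')
  also have "\<dots> = (\<integral>\<^sup>+a. emeasure (measure_pmf q) {b. (a, b) \<in> S} \<partial>p)"
  proof (intro nn_integral_cong)
    fix a
    have "(\<lambda>b. indicator S (a, b) :: ennreal) = indicator {b. (a, b) \<in> S}"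
      by (auto simp: indicator_def)
    then show "(\<integral>\<^sup>+b. indicator S (a, b) \<partial>q) = emeasure (measure_pmf q) {b. (a, b) \<in> S}"
      by simp
  qed
  also have "\<dots> \<le> (\<integral>\<^sup>+a. (indicator G a + ennreal c) \<partial>p)"
  proof (intro nn_integral_mono_AE AE_pmfI)
    fix a assume a: "a \<in> set_pmf p"
    show "emeasure (measure_pmf q) {b. (a, b) \<in> S} \<le> indicator G a + ennreal c"
    proof (cases "a \<in> G")
      case True
      have "emeasure (measure_pmf q) {b. (a, b) \<in> S} \<le> 1"
        by (rule measure_pmf.emeasure_le_1)
      also have "1 \<le> indicator G a + ennreal c" using True by simp
      finally show ?thesis .
    next
      case False
      then show ?thesis using h[OF a False]
        by (simp add: measure_pmf.emeasure_eq_measure ennreal_leI)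
    qed
  qed
  also have "\<dots> = emeasure (measure_pmf p) G + ennreal c"
    by (subst nn_integral_add) (auto simp: measure_pmf.emeasure_space_1)
  also have "\<dots> = ennreal (measure_pmf.prob p G + c)"
    using c by (simp add: measure_pmf.emeasure_eq_measure ennreal_plus)
  finally have "ennreal (measure_pmf.prob (pair_pmf p q) S) \<le> ennreal (measure_pmf.prob p G + c)"
    by (simp only: measure_pmf.emeasure_eq_measure)
  moreover have "0 \<le> measure_pmf.prob p G + c" using c by simp
  ultimately show ?thesis using ennreal_le_iff by blast
qed

lemma prob_disjoint:
  assumes "finite S" "U \<subseteq> S" "0 \<le> p" "p \<le> 1"
  shows "measure_pmf.prob (random_subset S p) {A. A \<inter> U = {}} = (1 - p) ^ card U"
proof -
  have "measure_pmf.prob (random_subset S p) {A. A \<inter> U = {}}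
      = measure_pmf.prob (Pi_pmf S False (\<lambda>_. bernoulli_pmf p))
          (Pi S (\<lambda>x. if x \<in> U then {False} else UNIV))"
    unfolding random_subset_def measure_map_pmf
    by (rule arg_cong[where f="measure_pmf.prob _"]) (use assms in \<open>auto simp: Pi_def\<close>)
  also have "\<dots> = (\<Prod>x\<in>S. if x \<in> U then 1 - p else 1)"
    using assms by (subst measure_Pi_pmf_Pi) (auto intro!: prod.cong simp: measure_pmf_single)
  also have "\<dots> = (1 - p) ^ card U"
    using assms by (subst prod.If_cases) (auto simp: Int_absorb1)
  finally show ?thesis .
qed

theorem lemma4p5:
  fixes X :: "'a set" and Y :: "'b set" and Z :: "'c set"
    and T :: "('a \<times> 'b \<times> 'c) set" and \<alpha> \<beta> \<gamma> :: real
  assumes "finite X" "finite Y" "finite Z"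
    and "T \<subseteq> X \<times> Y \<times> Z"
    and "0 \<le> \<alpha>" "\<alpha> \<le> 1" "0 \<le> \<beta>" "\<beta> \<le> 1" "0 \<le> \<gamma>" "\<gamma> \<le> 1"
  shows "measure_pmf.prob
           (pair_pmf (random_subset X \<alpha>) (pair_pmf (random_subset Y \<beta>) (random_subset Z \<gamma>)))
           {(A, B, C). T \<inter> (A \<times> B \<times> C) = {}}
         \<le> (1 - \<alpha>) ^ card (projX ` T)
           + (1 - \<beta>) ^ Min ((\<lambda>x. card (projY ` (T \<inter> ({x} \<times> Y \<times> Z)))) ` projX ` T)
           + (1 - \<gamma>) ^ Min ((\<lambda>(x, y). card (projZ ` (T \<inter> ({x} \<times> {y} \<times> Z)))) ` projXY ` T)"
proof -
  define PX where "PX = projX ` T"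
  define Yx where "Yx = (\<lambda>x. projY ` (T \<inter> ({x} \<times> Y \<times> Z)))"
  define Zxy where "Zxy = (\<lambda>(x, y). projZ ` (T \<inter> ({x} \<times> {y} \<times> Z)))"
  define mY where "mY = Min ((\<lambda>x. card (projY ` (T \<inter> ({x} \<times> Y \<times> Z)))) ` projX ` T)"
  define mZ where "mZ = Min ((\<lambda>(x, y). card (projZ ` (T \<inter> ({x} \<times> {y} \<times> Z)))) ` projXY ` T)"
  have finT: "finite T" using assms(1-4) by (meson finite_SigmaI finite_subset)
  have cZ: "0 \<le> (1 - \<gamma>) ^ mZ" using assms by simp
  have cY: "0 \<le> (1 - \<beta>) ^ mY" using assms by simp
  have stepB: "measure_pmf.prob (pair_pmf (random_subset Y \<beta>) (random_subset Z \<gamma>))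
        {(B, C). T \<inter> (A \<times> B \<times> C) = {}} \<le> (1 - \<beta>) ^ mY + (1 - \<gamma>) ^ mZ"
    if x: "x \<in> A" "x \<in> PX" for A x
  proof -
    have "measure_pmf.prob (pair_pmf (random_subset Y \<beta>) (random_subset Z \<gamma>))
        {(B, C). T \<inter> (A \<times> B \<times> C) = {}}
        \<le> measure_pmf.prob (random_subset Y \<beta>) {B. B \<inter> Yx x = {}} + (1 - \<gamma>) ^ mZ"
    proof (rule pair_bound[OF cZ])
      fix B assume "B \<notin> {B. B \<inter> Yx x = {}}"
      then obtain y where y: "y \<in> B" "y \<in> Yx x" by auto
      then obtain z0 where xyz0: "(x, y, z0) \<in> T"
        unfolding Yx_def projY_def by auto
      have sub: "{C. (B, C) \<in> {(B, C). T \<inter> (A \<times> B \<times> C) = {}}} \<subseteq> {C. C \<inter> Zxy (x, y) = {}}"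
        using x y unfolding Zxy_def projZ_def by fastforce
      have ZS: "Zxy (x, y) \<subseteq> Z" using assms(4) unfolding Zxy_def projZ_def by auto
      have "measure_pmf.prob (random_subset Z \<gamma>) {C. (B, C) \<in> {(B, C). T \<inter> (A \<times> B \<times> C) = {}}}
          \<le> measure_pmf.prob (random_subset Z \<gamma>) {C. C \<inter> Zxy (x, y) = {}}"
        by (rule measure_pmf.finite_measure_mono[OF sub]) simp
      also have "\<dots> = (1 - \<gamma>) ^ card (Zxy (x, y))"
        by (rule prob_disjoint[OF assms(3) ZS assms(9,10)])
      also have "\<dots> \<le> (1 - \<gamma>) ^ mZ"
      proof (rule power_decreasing)
        have "(x, y) \<in> projXY ` T" using xyz0 unfolding projXY_def by force
        then show "mZ \<le> card (Zxy (x, y))"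
          unfolding mZ_def Zxy_def using finT by (intro Min_le) auto
      qed (use assms in auto)
      finally show "measure_pmf.prob (random_subset Z \<gamma>) {C. (B, C) \<in> {(B, C). T \<inter> (A \<times> B \<times> C) = {}}}
          \<le> (1 - \<gamma>) ^ mZ" .
    qed
    also have "measure_pmf.prob (random_subset Y \<beta>) {B. B \<inter> Yx x = {}} = (1 - \<beta>) ^ card (Yx x)"
      by (rule prob_disjoint[OF assms(2) _ assms(7,8)]) (use assms(4) in \<open>auto simp: Yx_def projY_def\<close>)
    also have "(1 - \<beta>) ^ card (Yx x) \<le> (1 - \<beta>) ^ mY"
    proof (rule power_decreasing)
      show "mY \<le> card (Yx x)"
        unfolding mY_def Yx_def using finT x(2) unfolding PX_def by (intro Min_le) auto
    qed (use assms in auto)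
    finally show ?thesis by simp
  qed
  have "measure_pmf.prob
           (pair_pmf (random_subset X \<alpha>) (pair_pmf (random_subset Y \<beta>) (random_subset Z \<gamma>)))
           {(A, B, C). T \<inter> (A \<times> B \<times> C) = {}}
        \<le> measure_pmf.prob (random_subset X \<alpha>) {A. A \<inter> PX = {}} + ((1 - \<beta>) ^ mY + (1 - \<gamma>) ^ mZ)"
  proof (rule pair_bound)
    show "0 \<le> (1 - \<beta>) ^ mY + (1 - \<gamma>) ^ mZ" using cY cZ by simp
  next
    fix A assume "A \<notin> {A. A \<inter> PX = {}}"
    then obtain x where x: "x \<in> A" "x \<in> PX" by auto
    have "{b. (A, b) \<in> {(A, B, C). T \<inter> (A \<times> B \<times> C) = {}}} = {(B, C). T \<inter> (A \<times> B \<times> C) = {}}"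
      by auto
    then show "measure_pmf.prob (pair_pmf (random_subset Y \<beta>) (random_subset Z \<gamma>))
        {b. (A, b) \<in> {(A, B, C). T \<inter> (A \<times> B \<times> C) = {}}} \<le> (1 - \<beta>) ^ mY + (1 - \<gamma>) ^ mZ"
      using stepB[OF x] by simp
  qed
  also have "measure_pmf.prob (random_subset X \<alpha>) {A. A \<inter> PX = {}} = (1 - \<alpha>) ^ card PX"
    by (rule prob_disjoint[OF assms(1) _ assms(5,6)]) (use assms(4) in \<open>auto simp: PX_def projX_def\<close>)
  finally show ?thesis unfolding PX_def mY_def mZ_def by simp
qed

end
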